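(* Let $0\le\lambda<\gamma\le\delta$ and let $\mathfrak{f}=\mathfrak{s}+\overline{\mathfrak{t}}\in\mathcal{H}^0$ with $\mathfrak{s}(z)=z+\sum_{m\ge2}a_mz^m$, $\mathfrak{t}(z)=\sum_{m\ge2}b_mz^m$. If $$\sum_{m=2}^\infty m^2[2\gamma+(\delta-\gamma)(m-1)](|a_m|+|b_m|)\le2(\gamma-\lambda),$$ then $\mathfrak{f}\in\mathcal{R}_H^0(\gamma,\delta,\lambda)$.
   Context: Let $\mathcal{U}=\{z\in\mathbb{C}:|z|<1\}$. $\mathcal{H}^0$ denotes the class of complex-valued harmonic functions $\mathfrak{f}=\mathfrak{s}+\overline{\mathfrak{t}}$ on $\mathcal{U}$, where $\mathfrak{s}(z)=z+\sum_{m\ge2}a_mz^m$ and $\mathfrak{t}(z)=\sum_{m\ge2}b_mz^m$ are analytic in $\mathcal{U}$. For real $0\le\lambda<\gamma\le\delta$, $\mathcal{R}_H^0(\gamma,\delta,\lambda)$ is the class of $\mathfrak{f}=\mathfrak{s}+\overline{\mathfrak{t}}\in\mathcal{H}^0$ such that for all $z\in\mathcal{U}$, $\mathrm{Re}\left[\gamma\mathfrak{s}'(z)+\delta z\mathfrak{s}''(z)+\frac{\delta-\gamma}{2}z^2\mathfrak{s}'''(z)-\lambda\right]>\left|\gamma\mathfrak{t}'(z)+\delta z\mathfrak{t}''(z)+\frac{\delta-\gamma}{2}z^2\mathfrak{t}'''(z)\right|$. *)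

theory Defs
  imports "HOL-Complex_Analysis.Complex_Analysis"
begin

abbreviation unit_disk :: "complex set" where
  "unit_disk \<equiv> ball 0 1"

text \<open>Membership of f = s + conj t in the class H^0: s, t analytic on U,
  normalized by s(0) = 0, s'(0) = 1, t(0) = 0, t'(0) = 0.\<close>
definition in_H0 :: "(complex \<Rightarrow> complex) \<Rightarrow> (complex \<Rightarrow> complex) \<Rightarrow> bool" where
  "in_H0 s t \<longleftrightarrow> s holomorphic_on unit_disk \<and> t holomorphic_on unit_disk \<and>
     s 0 = 0 \<and> deriv s 0 = 1 \<and> t 0 = 0 \<and> deriv t 0 = 0"

definition Lop :: "real \<Rightarrow> real \<Rightarrow> (complex \<Rightarrow> complex) \<Rightarrow> complex \<Rightarrow> complex" where
  "Lop \<gamma> \<delta> h z = of_real \<gamma> * deriv h z + of_real \<delta> * z * (deriv ^^ 2) h z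
     + of_real ((\<delta> - \<gamma>) / 2) * z ^ 2 * (deriv ^^ 3) h z"

definition in_RH0 :: "real \<Rightarrow> real \<Rightarrow> real \<Rightarrow> (complex \<Rightarrow> complex) \<Rightarrow> (complex \<Rightarrow> complex) \<Rightarrow> bool" where
  "in_RH0 \<gamma> \<delta> lam s t \<longleftrightarrow> in_H0 s t \<and>
     (\<forall>z\<in>unit_disk. Re (Lop \<gamma> \<delta> s z - of_real lam) > norm (Lop \<gamma> \<delta> t z))"

end

theory Submission
  imports Defs
begin

lemma diffs_sums_deriv:
  fixes c :: "nat \<Rightarrow> complex"
  assumes A: "\<forall>z\<in>unit_disk. (\<lambda>n. c n * z^n) sums f z" and z: "z \<in> unit_disk"
  shows "(\<lambda>n. diffs c n * z^n) sums deriv f z"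
proof -
  have sm: "\<And>w. norm w < 1 \<Longrightarrow> (\<lambda>n. c n * w^n) sums f w" using A by auto
  have nz: "norm z < 1" using z by auto
  have d1: "((\<lambda>w. \<Sum>n. c n * w^n) has_field_derivative (\<Sum>n. diffs c n * z^n)) (at z)"
    by (rule termdiffs_strong'[OF _ nz]) (use sm sums_summable in blast)
  have ev: "eventually (\<lambda>w. (\<Sum>n. c n * w^n) = f w) (nhds z)"
    using eventually_nhds_in_open[OF open_ball z]
    by eventually_elim (use sm sums_unique in fastforce)
  have df: "(f has_field_derivative (\<Sum>n. diffs c n * z^n)) (at z)"
    using d1 DERIV_cong_ev[OF refl ev refl] by simp
  then have "deriv f z = (\<Sum>n. diffs c n * z^n)" by (rule DERIV_imp_deriv)
  moreover have "(\<lambda>n. diffs c n * z^n) sums (\<Sum>n. diffs c n * z^n)"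
    by (rule termdiffs_sums_strong[OF sm df nz])
  ultimately show ?thesis by simp
qed

lemma higher_sums:
  fixes c :: "nat \<Rightarrow> complex"
  assumes A: "\<forall>z\<in>unit_disk. (\<lambda>n. c n * z^n) sums f z"
  shows "\<forall>z\<in>unit_disk. (\<lambda>n. (diffs ^^ k) c n * z^n) sums (deriv ^^ k) f z"
proof (induction k)
  case 0
  then show ?case using A by simp
next
  case (Suc k)
  show ?case
    using diffs_sums_deriv[OF Suc.IH] by simp
qed

lemma shift1:
  fixes c :: "nat \<Rightarrow> complex"
  assumes A: "\<forall>z\<in>unit_disk. (\<lambda>n. c n * z^n) sums f z" and z: "z \<in> unit_disk"
  shows "(\<lambda>n. of_nat n * c n * z^n) sums (z * (deriv ^^ 1) f z)"
proof -
  have "(\<lambda>n. z * ((diffs ^^ 1) c n * z^n)) sums (z * (deriv ^^ 1) f z)"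
    using higher_sums[OF A, of 1] z by (intro sums_mult) auto
  also have "(\<lambda>n. z * ((diffs ^^ 1) c n * z^n)) = (\<lambda>i. (\<lambda>n. of_nat n * c n * z^n) (i + 1))"
    by (auto simp: diffs_def algebra_simps)
  finally show ?thesis by (subst (asm) sums_zero_iff_shift) auto
qed

lemma shift2:
  fixes c :: "nat \<Rightarrow> complex"
  assumes A: "\<forall>z\<in>unit_disk. (\<lambda>n. c n * z^n) sums f z" and z: "z \<in> unit_disk"
  shows "(\<lambda>n. of_nat n * (of_nat n - 1) * c n * z^n) sums (z^2 * (deriv ^^ 2) f z)"
proof -
  have "(\<lambda>n. z^2 * ((diffs ^^ 2) c n * z^n)) sums (z^2 * (deriv ^^ 2) f z)"
    using higher_sums[OF A, of 2] z by (intro sums_mult) auto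
  also have "(\<lambda>n. z^2 * ((diffs ^^ 2) c n * z^n)) = (\<lambda>i. (\<lambda>n. of_nat n * (of_nat n - 1) * c n * z^n) (i + 2))"
    by (auto simp: diffs_def algebra_simps numeral_2_eq_2)
  finally show ?thesis by (subst (asm) sums_zero_iff_shift) (auto simp: less_2_cases_iff)
qed

lemma shift3:
  fixes c :: "nat \<Rightarrow> complex"
  assumes A: "\<forall>z\<in>unit_disk. (\<lambda>n. c n * z^n) sums f z" and z: "z \<in> unit_disk"
  shows "(\<lambda>n. of_nat n * (of_nat n - 1) * (of_nat n - 2) * c n * z^n) sums (z^3 * (deriv ^^ 3) f z)"
proof -
  have "(\<lambda>n. z^3 * ((diffs ^^ 3) c n * z^n)) sums (z^3 * (deriv ^^ 3) f z)"
    using higher_sums[OF A, of 3] z by (intro sums_mult) auto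
  also have "(\<lambda>n. z^3 * ((diffs ^^ 3) c n * z^n)) = (\<lambda>i. (\<lambda>n. of_nat n * (of_nat n - 1) * (of_nat n - 2) * c n * z^n) (i + 3))"
    by (auto simp: diffs_def algebra_simps numeral_3_eq_3)
  finally show ?thesis by (subst (asm) sums_zero_iff_shift) (auto simp: numeral_3_eq_3 less_Suc_eq)
qed


lemma norm_bound:
  fixes g :: "nat \<Rightarrow> complex"
  assumes "g sums W" "\<And>k. norm (g k) \<le> h k" "h sums H"
  shows "norm W \<le> H"
proof -
  have sh: "summable h" using assms(3) by (rule sums_summable)
  have sn: "summable (\<lambda>k. norm (g k))"
    by (rule summable_comparison_test[OF _ sh]) (use assms(2) in auto)
  have "norm W = norm (suminf g)" using assms(1) by (simp add: sums_iff)
  also have "\<dots> \<le> (\<Sum>k. norm (g k))" by (rule summable_norm[OF sn])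
  also have "\<dots> \<le> suminf h" by (rule suminf_le[OF assms(2) sn sh])
  also have "\<dots> = H" using assms(3) by (simp add: sums_iff)
  finally show ?thesis .
qed

lemma Lop_sums:
  fixes c :: "nat \<Rightarrow> complex"
  assumes A: "\<forall>z\<in>unit_disk. (\<lambda>n. c n * z^n) sums f z" and z: "z \<in> unit_disk"
  shows "(\<lambda>n. of_real (real n ^ 2 * (2 * \<gamma> + (\<delta> - \<gamma>) * (real n - 1)) / 2) * c n * z^n)
          sums (z * Lop \<gamma> \<delta> f z)"
proof -
  have "(\<lambda>n. of_real \<gamma> * (of_nat n * c n * z^n) + of_real \<delta> * (of_nat n * (of_nat n - 1) * c n * z^n)
      + of_real ((\<delta> - \<gamma>) / 2) * (of_nat n * (of_nat n - 1) * (of_nat n - 2) * c n * z^n))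
      sums (of_real \<gamma> * (z * (deriv ^^ 1) f z) + of_real \<delta> * (z^2 * (deriv ^^ 2) f z)
         + of_real ((\<delta> - \<gamma>) / 2) * (z^3 * (deriv ^^ 3) f z))"
    by (intro sums_add sums_mult shift1[OF A z] shift2[OF A z] shift3[OF A z])
  also have "of_real \<gamma> * (z * (deriv ^^ 1) f z) + of_real \<delta> * (z^2 * (deriv ^^ 2) f z)
         + of_real ((\<delta> - \<gamma>) / 2) * (z^3 * (deriv ^^ 3) f z) = z * Lop \<gamma> \<delta> f z"
    by (simp add: Lop_def algebra_simps power2_eq_square power3_eq_cube)
  also have "(\<lambda>n. of_real \<gamma> * (of_nat n * c n * z^n) + of_real \<delta> * (of_nat n * (of_nat n - 1) * c n * z^n)
      + of_real ((\<delta> - \<gamma>) / 2) * (of_nat n * (of_nat n - 1) * (of_nat n - 2) * c n * z^n))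
      = (\<lambda>n. of_real (real n ^ 2 * (2 * \<gamma> + (\<delta> - \<gamma>) * (real n - 1)) / 2) * c n * z^n)"
  proof
    fix n
    have r: "real n ^ 2 * (2 * \<gamma> + (\<delta> - \<gamma>) * (real n - 1)) / 2
      = \<gamma> * real n + \<delta> * (real n * (real n - 1)) + (\<delta> - \<gamma>) / 2 * (real n * (real n - 1) * (real n - 2))"
      by (simp add: algebra_simps power2_eq_square power3_eq_cube field_simps)
    show "of_real \<gamma> * (of_nat n * c n * z^n) + of_real \<delta> * (of_nat n * (of_nat n - 1) * c n * z^n)
      + of_real ((\<delta> - \<gamma>) / 2) * (of_nat n * (of_nat n - 1) * (of_nat n - 2) * c n * z^n)
      = of_real (real n ^ 2 * (2 * \<gamma> + (\<delta> - \<gamma>) * (real n - 1)) / 2) * c n * z^n"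
      unfolding r by (simp add: algebra_simps)
  qed
  finally show ?thesis .
qed


theorem theorem8:
  fixes \<gamma> \<delta> lam :: real and s t :: "complex \<Rightarrow> complex" and a b :: "nat \<Rightarrow> complex"
  assumes "0 \<le> lam" and "lam < \<gamma>" and "\<gamma> \<le> \<delta>"
    and "in_H0 s t"
    and "a 0 = 0" and "a 1 = 1" and "b 0 = 0" and "b 1 = 0"
    and "\<forall>z\<in>unit_disk. (\<lambda>m. a m * z ^ m) sums s z"
    and "\<forall>z\<in>unit_disk. (\<lambda>m. b m * z ^ m) sums t z"
    and "summable (\<lambda>k. let m = k + 2 in
           real m ^ 2 * (2 * \<gamma> + (\<delta> - \<gamma>) * (real m - 1)) * (norm (a m) + norm (b m)))"
    and "(\<Sum>k. let m = k + 2 in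
           real m ^ 2 * (2 * \<gamma> + (\<delta> - \<gamma>) * (real m - 1)) * (norm (a m) + norm (b m)))
         \<le> 2 * (\<gamma> - lam)"
  shows "in_RH0 \<gamma> \<delta> lam s t"
proof -
  define p :: "nat \<Rightarrow> real" where "p n = real n ^ 2 * (2 * \<gamma> + (\<delta> - \<gamma>) * (real n - 1)) / 2" for n
  define T where "T k = (let m = k + 2 in
           real m ^ 2 * (2 * \<gamma> + (\<delta> - \<gamma>) * (real m - 1)) * (norm (a m) + norm (b m)))" for k
  have T: "T k = 2 * (p (k+2) * norm (a (k+2))) + 2 * (p (k+2) * norm (b (k+2)))" for k
    by (simp add: T_def p_def Let_def field_simps)
  have g0: "\<gamma> > 0" using assms(1,2) by simp
  have p0: "p (k+2) \<ge> 0" for k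
    unfolding p_def using g0 assms(3) by (intro divide_nonneg_pos mult_nonneg_nonneg) auto
  have sT: "summable T" using assms(11) unfolding T_def .
  have sA: "summable (\<lambda>k. p (k+2) * norm (a (k+2)))"
    by (rule summable_comparison_test[OF _ sT]) (use p0 T in \<open>auto intro!: exI[of _ 0]\<close>)
  have sB: "summable (\<lambda>k. p (k+2) * norm (b (k+2)))"
    by (rule summable_comparison_test[OF _ sT]) (use p0 T in \<open>auto intro!: exI[of _ 0]\<close>)
  define A where "A = (\<Sum>k. p (k+2) * norm (a (k+2)))"
  define B where "B = (\<Sum>k. p (k+2) * norm (b (k+2)))"
  have "suminf T = 2 * A + 2 * B"
  proof -
    have "T sums (2 * A + 2 * B)"
      unfolding T A_def B_def
      by (intro sums_add sums_mult summable_sums sA sB)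
    then show ?thesis by (simp add: sums_iff)
  qed
  then have AB: "A + B \<le> \<gamma> - lam" using assms(12) unfolding T_def by simp
  have A0: "A \<ge> 0" unfolding A_def by (rule suminf_nonneg[OF sA]) (use p0 in auto)
  have B0: "B \<ge> 0" unfolding B_def by (rule suminf_nonneg[OF sB]) (use p0 in auto)
  have ds: "deriv s 0 = 1" "deriv t 0 = 0" using assms(4) by (simp_all add: in_H0_def)
  have main: "Re (Lop \<gamma> \<delta> s z - of_real lam) > norm (Lop \<gamma> \<delta> t z)" if z: "z \<in> unit_disk" for z
  proof (cases "z = 0")
    case True
    then show ?thesis using ds assms(2) by (simp add: Lop_def)
  next
    case False
    have nz: "norm z < 1" using z by simp
    have nzp: "norm z > 0" using False by simp
    have bound: "norm W \<le> norm z ^ 2 * (\<Sum>k. p (k+2) * norm (c (k+2)))"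
      if W: "(\<lambda>k. of_real (p (k+2)) * c (k+2) * z^(k+2)) sums W"
        and sc: "summable (\<lambda>k. p (k+2) * norm (c (k+2)))" for W c
    proof (rule norm_bound[OF W])
      show "(\<lambda>k. norm z ^ 2 * (p (k+2) * norm (c (k+2)))) sums (norm z ^ 2 * (\<Sum>k. p (k+2) * norm (c (k+2))))"
        by (intro sums_mult summable_sums sc)
      fix k
      have "norm z ^ (k+2) \<le> norm z ^ 2"
        using nz by (intro power_decreasing) auto
      then have "p (k+2) * norm (c (k+2)) * norm z ^ (k+2) \<le> p (k+2) * norm (c (k+2)) * norm z ^ 2"
        by (intro mult_left_mono) (use p0 in auto)
      then show "norm (of_real (p (k+2)) * c (k+2) * z^(k+2)) \<le> norm z ^ 2 * (p (k+2) * norm (c (k+2)))"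
        using p0[of k] by (simp add: norm_mult norm_power algebra_simps)
    qed
    have Ls: "(\<lambda>n. of_real (p n) * a n * z^n) sums (z * Lop \<gamma> \<delta> s z)"
      using Lop_sums[OF assms(9) z] unfolding p_def .
    have Lt: "(\<lambda>n. of_real (p n) * b n * z^n) sums (z * Lop \<gamma> \<delta> t z)"
      using Lop_sums[OF assms(10) z] unfolding p_def .
    have p01: "p 0 = 0" "p (Suc 0) = \<gamma>" by (simp_all add: p_def)
    have ab1: "a (Suc 0) = 1" "b (Suc 0) = 0" using assms(6,8) by simp_all
    have Ls2: "(\<lambda>k. of_real (p (k+2)) * a (k+2) * z^(k+2)) sums (z * Lop \<gamma> \<delta> s z - of_real \<gamma> * z)"
      using Ls sums_iff_shift[of "\<lambda>n. of_real (p n) * a n * z^n" 2 "z * Lop \<gamma> \<delta> s z - of_real \<gamma> * z"]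
      by (simp add: numeral_2_eq_2 p01 ab1 assms(5))
    have Lt2: "(\<lambda>k. of_real (p (k+2)) * b (k+2) * z^(k+2)) sums (z * Lop \<gamma> \<delta> t z)"
      using Lt sums_iff_shift[of "\<lambda>n. of_real (p n) * b n * z^n" 2 "z * Lop \<gamma> \<delta> t z"]
      by (simp add: numeral_2_eq_2 p01 ab1 assms(7))
    have bs: "norm (z * Lop \<gamma> \<delta> s z - of_real \<gamma> * z) \<le> norm z ^ 2 * A"
      using bound[OF Ls2 sA] unfolding A_def .
    have bt: "norm (z * Lop \<gamma> \<delta> t z) \<le> norm z ^ 2 * B"
      using bound[OF Lt2 sB] unfolding B_def .
    have "norm z * norm (Lop \<gamma> \<delta> s z - of_real \<gamma>) \<le> norm z * (norm z * A)"
    proof -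
      have "z * Lop \<gamma> \<delta> s z - of_real \<gamma> * z = z * (Lop \<gamma> \<delta> s z - of_real \<gamma>)"
        by (simp add: algebra_simps)
      then show ?thesis using bs by (simp add: norm_mult power2_eq_square mult.assoc)
    qed
    then have es: "norm (Lop \<gamma> \<delta> s z - of_real \<gamma>) \<le> norm z * A"
      using nzp by simp
    have "norm z * norm (Lop \<gamma> \<delta> t z) \<le> norm z * (norm z * B)"
      using bt by (simp add: norm_mult power2_eq_square algebra_simps)
    then have et: "norm (Lop \<gamma> \<delta> t z) \<le> norm z * B"
      using nzp by simp
    have "Re (Lop \<gamma> \<delta> s z - of_real \<gamma>) \<ge> - (norm z * A)"
      using es abs_Re_le_cmod[of "Lop \<gamma> \<delta> s z - of_real \<gamma>"] by linarith
    then have r1: "Re (Lop \<gamma> \<delta> s z - of_real lam) \<ge> \<gamma> - lam - norm z * A" by simp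
    have "norm z * (A + B) \<le> norm z * (\<gamma> - lam)" using AB by (intro mult_left_mono) auto
    also have "\<dots> < \<gamma> - lam" using nz assms(2) by simp
    finally show ?thesis using r1 et by (simp add: algebra_simps)
  qed
  show ?thesis unfolding in_RH0_def using assms(4) main by blast
qed

end
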